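(* Let $X$ be a non-empty set. The monoid $T_X^0$ is protomodal, and for every maximal right pre-reduced subset $E\subseteq E(T_X^0)$, $T_X^0$ is an inductive left $E$-monoid, integral with $0\in E$, and $(PT_X,\cdot,D)\cong Rest_0(E,T_X^0)$ as unary semigroups.
   Context: All maps are composed left to right: for (partial) maps $s,t$ on $X$, $st$ means apply $s$ first, then $t$. $PT_X$ is the monoid of partial functions $X\to X$ under this composition, with $D(s)$ the identity map on $\mathrm{dom}(s)$; it is a left restriction monoid. $T_X$ is the submonoid of total functions, and $T_X^0$ is $T_X$ with a new zero element $0$ adjoined. For a semigroup $S$, $E(S)$ is its set of idempotents and $Sf=\{uf\mid u\in S\}$; for $e,f\in E(S)$, $e\le_r f$ iff $e=ef$, and $e\sim_r f$ iff $e\le_r f$ and $f\le_r e$. $E\subseteq E(S)$ is right pre-reduced if $e=ef$ and $f=fe$ imply $e=f$ for $e,f\in E$, and maximal right pre-reduced if it contains exactly one element of each $\sim_r$-class of $E(S)$. $Eq(s,t)=\{u\in S\mid us=ut\}$. A monoid $S$ is protomodal if for every $e\in E(S)$ and $s\in S$, $Eq(s,se)$ is non-empty and equals $Sf$ for some $f\in E(S)$. A monoid with zero is integral if $st=0$ implies $s=0$ or $t=0$. Let $S$ be a monoid and $1\in E\subseteq E(S)$. $S$ is an inductive left $E$-monoid if $E$ is right pre-reduced, $(E,\le_r)$ is a meet-semilattice with meet $\wedge$, and (I1') for all $t\in S$, $e\in E$ there is $t\cdot e\in E$ such that for all $s\in S$: $ste=st$ iff $s(t\cdot e)=s$; (I2')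 for $s\in S$, $e,f\in E$: $se=sf=s$ implies $s(e\wedge f)=s$. If $S$ is also integral with zero and $0\in E$, $Rest_0(E,S)$ is the set $\{(e,s)\in E\times S\mid es=s,\ s=0\Rightarrow e=0\}$ with multiplication $(e,s)(f,t)=(e\wedge(s\cdot f),(e\wedge(s\cdot f))st)$ and $D((e,s))=(e,e)$. *)

theory Defs
  imports Main
begin

definition is_monoid :: "('m \<Rightarrow> 'm \<Rightarrow> 'm) \<Rightarrow> 'm \<Rightarrow> bool" where
  "is_monoid mult one \<longleftrightarrow>
     (\<forall>a b c. mult (mult a b) c = mult a (mult b c)) \<and>
     (\<forall>a. mult one a = a \<and> mult a one = a)"

definition idems :: "('m \<Rightarrow> 'm \<Rightarrow> 'm) \<Rightarrow> 'm set" where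
  "idems mult = {e. mult e e = e}"

definition le_r :: "('m \<Rightarrow> 'm \<Rightarrow> 'm) \<Rightarrow> 'm \<Rightarrow> 'm \<Rightarrow> bool" where
  "le_r mult e f \<longleftrightarrow> e = mult e f"

definition sim_r :: "('m \<Rightarrow> 'm \<Rightarrow> 'm) \<Rightarrow> 'm \<Rightarrow> 'm \<Rightarrow> bool" where
  "sim_r mult e f \<longleftrightarrow> le_r mult e f \<and> le_r mult f e"

definition right_pre_reduced :: "('m \<Rightarrow> 'm \<Rightarrow> 'm) \<Rightarrow> 'm set \<Rightarrow> bool" where
  "right_pre_reduced mult E \<longleftrightarrow> E \<subseteq> idems mult \<and>
     (\<forall>e\<in>E. \<forall>f\<in>E. e = mult e f \<and> f = mult f e \<longrightarrow> e = f)"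

definition max_right_pre_reduced :: "('m \<Rightarrow> 'm \<Rightarrow> 'm) \<Rightarrow> 'm set \<Rightarrow> bool" where
  "max_right_pre_reduced mult E \<longleftrightarrow> E \<subseteq> idems mult \<and>
     (\<forall>e\<in>idems mult. \<exists>!f. f \<in> E \<and> sim_r mult e f)"

definition Eq_set :: "('m \<Rightarrow> 'm \<Rightarrow> 'm) \<Rightarrow> 'm \<Rightarrow> 'm \<Rightarrow> 'm set" where
  "Eq_set mult s t = {u. mult u s = mult u t}"

definition left_ideal :: "('m \<Rightarrow> 'm \<Rightarrow> 'm) \<Rightarrow> 'm \<Rightarrow> 'm set" where
  "left_ideal mult f = {mult u f | u. True}"

definition protomodal :: "('m \<Rightarrow> 'm \<Rightarrow> 'm) \<Rightarrow> 'm \<Rightarrow> bool" where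
  "protomodal mult one \<longleftrightarrow> is_monoid mult one \<and>
     (\<forall>e\<in>idems mult. \<forall>s. Eq_set mult s (mult s e) \<noteq> {} \<and>
        (\<exists>f\<in>idems mult. Eq_set mult s (mult s e) = left_ideal mult f))"

definition is_zero :: "('m \<Rightarrow> 'm \<Rightarrow> 'm) \<Rightarrow> 'm \<Rightarrow> bool" where
  "is_zero mult z \<longleftrightarrow> (\<forall>s. mult z s = z \<and> mult s z = z)"

definition integral :: "('m \<Rightarrow> 'm \<Rightarrow> 'm) \<Rightarrow> 'm \<Rightarrow> bool" where
  "integral mult z \<longleftrightarrow> is_zero mult z \<and>
     (\<forall>s t. mult s t = z \<longrightarrow> s = z \<or> t = z)"

definition is_meet :: "('m \<Rightarrow> 'm \<Rightarrow> 'm) \<Rightarrow> 'm set \<Rightarrow> 'm \<Rightarrow> 'm \<Rightarrow> 'm \<Rightarrow> bool" where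
  "is_meet mult E e f g \<longleftrightarrow> g \<in> E \<and> le_r mult g e \<and> le_r mult g f \<and>
     (\<forall>h\<in>E. le_r mult h e \<and> le_r mult h f \<longrightarrow> le_r mult h g)"

definition meetE :: "('m \<Rightarrow> 'm \<Rightarrow> 'm) \<Rightarrow> 'm set \<Rightarrow> 'm \<Rightarrow> 'm \<Rightarrow> 'm" where
  "meetE mult E e f = (THE g. is_meet mult E e f g)"

definition is_dot :: "('m \<Rightarrow> 'm \<Rightarrow> 'm) \<Rightarrow> 'm set \<Rightarrow> 'm \<Rightarrow> 'm \<Rightarrow> 'm \<Rightarrow> bool" where
  "is_dot mult E t e g \<longleftrightarrow> g \<in> E \<and>
     (\<forall>s. mult (mult s t) e = mult s t \<longleftrightarrow> mult s g = s)"

definition dotE :: "('m \<Rightarrow> 'm \<Rightarrow> 'm) \<Rightarrow> 'm set \<Rightarrow> 'm \<Rightarrow> 'm \<Rightarrow> 'm" where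
  "dotE mult E t e = (THE g. is_dot mult E t e g)"

definition inductive_left_E_monoid :: "('m \<Rightarrow> 'm \<Rightarrow> 'm) \<Rightarrow> 'm \<Rightarrow> 'm set \<Rightarrow> bool" where
  "inductive_left_E_monoid mult one E \<longleftrightarrow>
     is_monoid mult one \<and> one \<in> E \<and> right_pre_reduced mult E \<and>
     (\<forall>e\<in>E. \<forall>f\<in>E. \<exists>g. is_meet mult E e f g) \<and>
     (\<forall>t. \<forall>e\<in>E. \<exists>g. is_dot mult E t e g) \<and>
     (\<forall>s. \<forall>e\<in>E. \<forall>f\<in>E. mult s e = s \<and> mult s f = s \<longrightarrow> mult s (meetE mult E e f) = s)"

definition Rest0_carrier :: "('m \<Rightarrow> 'm \<Rightarrow> 'm) \<Rightarrow> 'm set \<Rightarrow> 'm \<Rightarrow> ('m \<times> 'm) set" where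
  "Rest0_carrier mult E z = {(e, s). e \<in> E \<and> mult e s = s \<and> (s = z \<longrightarrow> e = z)}"

definition Rest0_mult :: "('m \<Rightarrow> 'm \<Rightarrow> 'm) \<Rightarrow> 'm set \<Rightarrow> 'm \<times> 'm \<Rightarrow> 'm \<times> 'm \<Rightarrow> 'm \<times> 'm" where
  "Rest0_mult mult E p q = (case p of (e, s) \<Rightarrow> case q of (f, t) \<Rightarrow>
      let g = meetE mult E e (dotE mult E s f) in (g, mult (mult g s) t))"

definition Rest0_D :: "'m \<times> 'm \<Rightarrow> 'm \<times> 'm" where
  "Rest0_D p = (fst p, fst p)"

text \<open>Concrete monoids; composition is left to right.  \<open>T_X^0\<close>: total maps
  with an adjoined zero \<open>None\<close>.\<close>
fun tmult :: "('a \<Rightarrow> 'a) option \<Rightarrow> ('a \<Rightarrow> 'a) option \<Rightarrow> ('a \<Rightarrow> 'a) option" where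
  "tmult (Some f) (Some g) = Some (g \<circ> f)"
| "tmult _ _ = None"

definition pmult :: "('a \<rightharpoonup> 'a) \<Rightarrow> ('a \<rightharpoonup> 'a) \<Rightarrow> ('a \<rightharpoonup> 'a)" where
  "pmult s t = (\<lambda>x. case s x of None \<Rightarrow> None | Some y \<Rightarrow> t y)"

definition pD :: "('a \<rightharpoonup> 'a) \<Rightarrow> ('a \<rightharpoonup> 'a)" where
  "pD s = (\<lambda>x. if x \<in> dom s then Some x else None)"

end

theory Submission imports Defs begin

definition supp :: "('a\<Rightarrow>'a) option \<Rightarrow> 'a set" where
  "supp a = (case a of None \<Rightarrow> {} | Some f \<Rightarrow> range f)"

definition idemOf :: "'a set \<Rightarrow> ('a\<Rightarrow>'a) option" where
  "idemOf S = (if S = {} then None else Some (\<lambda>x. if x \<in> S then x else (SOME y. y \<in> S)))"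

lemma tmult_assoc: "tmult (tmult a b) c = tmult a (tmult b c)"
  by (cases a; cases b; cases c) auto

lemma tmono: "is_monoid tmult (Some id)"
  unfolding is_monoid_def
  by (auto simp: tmult_assoc) (case_tac a; simp)+

lemma idem_cases: "a \<in> idems tmult \<longleftrightarrow> a = None \<or> (\<exists>f. a = Some f \<and> f \<circ> f = f)"
  unfolding idems_def by (cases a) auto

lemma supp_None_iff: "supp a = {} \<longleftrightarrow> a = None"
  unfolding supp_def by (cases a) auto

lemma idemOf_idem: "idemOf S \<in> idems tmult"
proof (cases "S = {}")
  case False
  then have "(SOME y. y \<in> S) \<in> S" by (simp add: some_in_eq)
  let ?f = "\<lambda>x. if x \<in> S then x else (SOME y. y \<in> S)"
  have "?f \<circ> ?f = ?f" using \<open>(SOME y. y \<in> S) \<in> S\<close> by (auto simp: fun_eq_iff)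
  then show ?thesis using False unfolding idem_cases idemOf_def by auto
qed (simp add: idemOf_def idem_cases)

lemma supp_idemOf: "supp (idemOf S) = S"
  unfolding idemOf_def supp_def
  apply (auto simp: some_in_eq)
  done

lemma fixes_char:
  assumes "a \<in> idems tmult"
  shows "tmult s a = s \<longleftrightarrow> (case s of None \<Rightarrow> True | Some \<sigma> \<Rightarrow> range \<sigma> \<subseteq> supp a)"
proof (cases s)
  case None then show ?thesis by simp
next
  case (Some \<sigma>)
  show ?thesis
  proof (cases "a = None")
    case True then show ?thesis using Some by (simp add: supp_def)
  next
    case False
    then obtain f where Some2: "a = Some f" by auto
    then have ff: "f \<circ> f = f" using assms idem_cases by auto
    have "f \<circ> \<sigma> = \<sigma> \<longleftrightarrow> range \<sigma> \<subseteq> range f"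
    proof
      assume "f \<circ> \<sigma> = \<sigma>" then show "range \<sigma> \<subseteq> range f" by (metis image_comp image_subsetI rangeI)
    next
      assume h: "range \<sigma> \<subseteq> range f"
      show "f \<circ> \<sigma> = \<sigma>"
      proof
        fix x obtain y where "\<sigma> x = f y" using h by blast
        then show "(f \<circ> \<sigma>) x = \<sigma> x" using ff by (metis comp_apply)
      qed
    qed
    then show ?thesis using Some Some2 by (simp add: supp_def)
  qed
qed

lemma le_supp:
  assumes "a \<in> idems tmult" "b \<in> idems tmult"
  shows "le_r tmult a b \<longleftrightarrow> supp a \<subseteq> supp b"
proof -
  have "le_r tmult a b \<longleftrightarrow> tmult a b = a" unfolding le_r_def by auto
  also have "\<dots> \<longleftrightarrow> supp a \<subseteq> supp b" using fixes_char[OF assms(2), of a]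
    by (cases a) (auto simp: supp_def)
  finally show ?thesis .
qed

lemma sim_supp:
  assumes "a \<in> idems tmult" "b \<in> idems tmult"
  shows "sim_r tmult a b \<longleftrightarrow> supp a = supp b"
  unfolding sim_r_def using le_supp[OF assms] le_supp[OF assms(2,1)] by auto

definition K :: "('a\<Rightarrow>'a) option \<Rightarrow> 'a set \<Rightarrow> 'a set" where
  "K t S = (case t of None \<Rightarrow> UNIV | Some h \<Rightarrow> h -` S)"

lemma dot_cond:
  assumes "e \<in> idems tmult" "g \<in> idems tmult" "supp g = K t (supp e)"
  shows "tmult (tmult s t) e = tmult s t \<longleftrightarrow> tmult s g = s"
  unfolding fixes_char[OF assms(1)] fixes_char[OF assms(2)] assms(3)
  by (cases s; cases t) (auto simp: K_def)

definition elE :: "('a\<Rightarrow>'a) option set \<Rightarrow> 'a set \<Rightarrow> ('a\<Rightarrow>'a) option" where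
  "elE E S = (THE a. a \<in> E \<and> supp a = S)"

lemma elE_ex1:
  assumes E: "max_right_pre_reduced tmult E"
  shows "\<exists>!a. a \<in> E \<and> supp a = S"
proof -
  have sub: "E \<subseteq> idems tmult" using E unfolding max_right_pre_reduced_def by auto
  have "\<forall>e\<in>idems tmult. \<exists>!f. f \<in> E \<and> sim_r tmult e f"
    using E unfolding max_right_pre_reduced_def by blast
  then have "\<exists>!f. f \<in> E \<and> sim_r tmult (idemOf S) f"
    using idemOf_idem[of S] by (rule bspec)
  moreover have "\<And>f. f \<in> E \<Longrightarrow> sim_r tmult (idemOf S) f \<longleftrightarrow> supp f = S"
  proof -
    fix f assume "f \<in> E"
    then have "f \<in> idems tmult" using sub by auto
    then show "sim_r tmult (idemOf S) f \<longleftrightarrow> supp f = S"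
      using sim_supp[OF idemOf_idem, of f S] supp_idemOf[of S] by auto
  qed
  then have "\<And>f. (f \<in> E \<and> sim_r tmult (idemOf S) f) = (f \<in> E \<and> supp f = S)" by blast
  ultimately show ?thesis by simp
qed

context
  fixes E :: "('a\<Rightarrow>'a) option set"
  assumes E: "max_right_pre_reduced tmult E"
begin

lemma Esub: "E \<subseteq> idems tmult" using E unfolding max_right_pre_reduced_def by auto

lemma elE_prop: "elE E S \<in> E \<and> supp (elE E S) = S"
  unfolding elE_def using theI'[OF elE_ex1[OF E]] .

lemma elE_in: "elE E S \<in> E" using elE_prop by auto
lemma supp_elE[simp]: "supp (elE E S) = S" using elE_prop by auto
lemma elE_supp: "a \<in> E \<Longrightarrow> elE E (supp a) = a"
  unfolding elE_def by (rule the1_equality[OF elE_ex1[OF E]]) simp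
lemma elE_empty: "elE E {} = None" using supp_elE[of "{}"] supp_None_iff[of "elE E {}"] by simp
lemma None_in: "None \<in> E" using elE_in[of "{}"] elE_empty by simp

lemma elE_Some: assumes "S \<noteq> {}"
  obtains f where "elE E S = Some f" "\<And>x. f x \<in> S" "\<And>x. x \<in> S \<Longrightarrow> f x = x"
proof -
  obtain f where f: "elE E S = Some f" using assms supp_None_iff[of "elE E S"] by auto
  have "Some f \<in> idems tmult" using f elE_in[of S] Esub by auto
  then have "f \<circ> f = f" unfolding idem_cases by simp
  moreover have "range f = S" using supp_elE[of S] f by (simp add: supp_def)
  ultimately have "\<And>x. f x \<in> S" "\<And>x. x \<in> S \<Longrightarrow> f x = x"
    by (auto, metis comp_apply)
  then show ?thesis using that f by blast
qed

lemma rpr: "right_pre_reduced tmult E"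
  unfolding right_pre_reduced_def
proof (intro conjI ballI impI)
  show "E \<subseteq> idems tmult" by (rule Esub)
  fix e f assume ef: "e \<in> E" "f \<in> E" and h: "e = tmult e f \<and> f = tmult f e"
  have i: "e \<in> idems tmult" "f \<in> idems tmult" using ef Esub by auto
  have sef: "supp e = supp f"
    using h le_supp[OF i] le_supp[OF i(2,1)] unfolding le_r_def by auto
  have "e = elE E (supp e)" using elE_supp[OF ef(1)] by (rule sym)
  also have "\<dots> = elE E (supp f)" using sef by (rule arg_cong)
  also have "\<dots> = f" by (rule elE_supp[OF ef(2)])
  finally show "e = f" .
qed

lemma meet: assumes ab: "a \<in> E" "b \<in> E"
  shows "is_meet tmult E a b (elE E (supp a \<inter> supp b))"
proof -
  let ?g = "elE E (supp a \<inter> supp b)"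
  have i: "a \<in> idems tmult" "b \<in> idems tmult" "?g \<in> idems tmult" using ab Esub elE_in by auto
  have "le_r tmult ?g a" using le_supp[OF i(3,1)] by simp
  moreover have "le_r tmult ?g b" using le_supp[OF i(3,2)] by simp
  moreover have "le_r tmult h ?g" if "h \<in> E" "le_r tmult h a" "le_r tmult h b" for h
  proof -
    have ih: "h \<in> idems tmult" using that Esub by auto
    show ?thesis using that le_supp[OF ih i(1)] le_supp[OF ih i(2)] le_supp[OF ih i(3)] by simp
  qed
  ultimately show ?thesis unfolding is_meet_def using elE_in by blast
qed

lemma unique_le: assumes "g \<in> E" "g' \<in> E" "le_r tmult g g'" "le_r tmult g' g" shows "g = g'"
proof -
  have "\<forall>e\<in>E. \<forall>f\<in>E. e = tmult e f \<and> f = tmult f e \<longrightarrow> e = f"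
    using rpr unfolding right_pre_reduced_def by blast
  then show ?thesis using assms unfolding le_r_def by blast
qed

lemma meetE_eq: assumes ab: "a \<in> E" "b \<in> E" shows "meetE tmult E a b = elE E (supp a \<inter> supp b)"
  unfolding meetE_def
proof (rule the_equality)
  show "is_meet tmult E a b (elE E (supp a \<inter> supp b))" by (rule meet[OF ab])
next
  fix g assume g: "is_meet tmult E a b g"
  have m: "is_meet tmult E a b (elE E (supp a \<inter> supp b))" by (rule meet[OF ab])
  show "g = elE E (supp a \<inter> supp b)"
  proof (rule unique_le)
    show "g \<in> E" using g unfolding is_meet_def by blast
    show "elE E (supp a \<inter> supp b) \<in> E" by (rule elE_in)
    show "le_r tmult g (elE E (supp a \<inter> supp b))" using g m unfolding is_meet_def by blast
    show "le_r tmult (elE E (supp a \<inter> supp b)) g" using g m unfolding is_meet_def by blast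
  qed
qed

definition rE :: "'a set \<Rightarrow> 'a \<Rightarrow> 'a" where "rE S = the (elE E S)"

lemma rE: assumes "S \<noteq> {}"
  shows "elE E S = Some (rE S)" "\<And>x. rE S x \<in> S" "\<And>x. x \<in> S \<Longrightarrow> rE S x = x"
proof -
  obtain f where "elE E S = Some f" "\<And>x. f x \<in> S" "\<And>x. x \<in> S \<Longrightarrow> f x = x"
    using elE_Some[OF assms] by blast
  then show "elE E S = Some (rE S)" "\<And>x. rE S x \<in> S" "\<And>x. x \<in> S \<Longrightarrow> rE S x = x"
    unfolding rE_def by auto
qed

lemma dot: "e \<in> E \<Longrightarrow> is_dot tmult E t e (elE E (K t (supp e)))"
  unfolding is_dot_def using dot_cond[of e "elE E (K t (supp e))" t] Esub elE_in by auto

lemma dotE_eq: assumes "e \<in> E" shows "dotE tmult E t e = elE E (K t (supp e))"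
  unfolding dotE_def
proof (rule the_equality)
  show "is_dot tmult E t e (elE E (K t (supp e)))" by (rule dot[OF assms])
next
  fix g assume g: "is_dot tmult E t e g"
  have d: "is_dot tmult E t e (elE E (K t (supp e)))" by (rule dot[OF assms])
  let ?h = "elE E (K t (supp e))"
  have "g \<in> E" "?h \<in> E" using g d unfolding is_dot_def by auto
  moreover have "tmult g g = g" "tmult ?h ?h = ?h" using calculation Esub by (auto simp: idems_def)
  moreover have "tmult g ?h = g" using g d calculation unfolding is_dot_def by metis
  moreover have "tmult ?h g = ?h" using g d calculation unfolding is_dot_def by metis
  ultimately show "g = ?h" using unique_le unfolding le_r_def by metis
qed

lemma Rest0_eq: assumes "a \<in> E" "b \<in> E"
  shows "Rest0_mult tmult E (a, s) (b, t) =
    (elE E (supp a \<inter> K s (supp b)), tmult (tmult (elE E (supp a \<inter> K s (supp b))) s) t)"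
  unfolding Rest0_mult_def using assms by (simp add: dotE_eq meetE_eq elE_in Let_def)

definition phi :: "('a \<rightharpoonup> 'a) \<Rightarrow> ('a\<Rightarrow>'a) option \<times> ('a\<Rightarrow>'a) option" where
  "phi p = (if dom p = {} then (None, None)
            else (elE E (dom p), Some (\<lambda>x. the (p (rE (dom p) x)))))"

lemma phi_in: "phi p \<in> E \<times> UNIV" unfolding phi_def using elE_in None_in by auto

lemma phi_fst_in: "fst (phi p) \<in> E" using phi_in[of p] by (simp add: mem_Times_iff)

lemma supp_fst_phi: "supp (fst (phi p)) = dom p"
proof (cases "dom p = {}")
  case True then show ?thesis unfolding phi_def by (simp add: supp_def)
next
  case False then show ?thesis unfolding phi_def using supp_elE[of "dom p"] by simp
qed

lemma phi_carrier: "phi p \<in> Rest0_carrier tmult E None"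
proof (cases "dom p = {}")
  case True then show ?thesis unfolding phi_def Rest0_carrier_def using None_in by simp
next
  case False
  note r = rE[OF False]
  have "tmult (Some (rE (dom p))) (Some (\<lambda>x. the (p (rE (dom p) x)))) = Some (\<lambda>x. the (p (rE (dom p) x)))"
    using r(2,3) by (auto simp: fun_eq_iff)
  moreover have "Some (rE (dom p)) \<in> E" using elE_in[of "dom p"] r(1) by simp
  ultimately show ?thesis using False r(1) unfolding phi_def Rest0_carrier_def by simp
qed

lemma phi_inj: "inj phi"
proof (rule injI)
  fix p q assume eq: "phi p = phi q"
  then have dpq: "dom p = dom q" using supp_fst_phi by metis
  show "p = q"
  proof (cases "dom p = {}")
    case True then show ?thesis using dpq by simp
  next
    case False
    note r = rE[OF False]
    have "(\<lambda>x. the (p (rE (dom p) x))) = (\<lambda>x. the (q (rE (dom p) x)))"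
      using eq False dpq unfolding phi_def by simp
    show ?thesis
    proof
      fix x show "p x = q x"
      proof (cases "x \<in> dom p")
        case True
        then have "the (p x) = the (q x)"
          using fun_cong[OF \<open>(\<lambda>x. the (p (rE (dom p) x))) = _\<close>, of x] r(3) by simp
        moreover have "p x = Some (the (p x))" using \<open>x \<in> dom p\<close> by auto
        moreover have "x \<in> dom q" using \<open>x \<in> dom p\<close> dpq by simp
        then have "q x = Some (the (q x))" by auto
        ultimately show ?thesis by simp
      next
        case False then show ?thesis using dpq by (metis domIff)
      qed
    qed
  qed
qed

lemma phi_surj: "range phi = Rest0_carrier tmult E None"
proof
  show "range phi \<subseteq> Rest0_carrier tmult E None" using phi_carrier by auto
next
  show "Rest0_carrier tmult E None \<subseteq> range phi"
  proof
    fix c assume c: "c \<in> Rest0_carrier tmult E None"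
    then obtain a s where cs: "c = (a, s)" "a \<in> E" "tmult a s = s" "s = None \<longrightarrow> a = None"
      unfolding Rest0_carrier_def by auto
    show "c \<in> range phi"
    proof (cases "a = None")
      case True
      then have "s = None" using cs by simp
      then have "c = phi Map.empty" using True cs unfolding phi_def by simp
      then show ?thesis by blast
    next
      case False
      then obtain \<sigma> where s: "s = Some \<sigma>" using cs by (cases s) auto
      define A where "A = supp a"
      have A: "A \<noteq> {}" using False supp_None_iff A_def by auto
      note r = rE[OF A]
      have a: "a = Some (rE A)" using r(1) elE_supp[OF cs(2)] A_def by simp
      have sr: "\<sigma> \<circ> rE A = \<sigma>" using cs(3) a s by simp
      define p where "p = (\<lambda>x. if x \<in> A then Some (\<sigma> x) else None)"
      have dp: "dom p = A" unfolding p_def by (auto split: if_splits)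
      have "(\<lambda>x. the (p (rE A x))) = \<sigma>"
      proof
        fix x show "the (p (rE A x)) = \<sigma> x" using r(2) fun_cong[OF sr, of x] unfolding p_def by simp
      qed
      then have "phi p = c" unfolding phi_def using dp A cs(1) s a r(1) by simp
      then show ?thesis by blast
    qed
  qed
qed

lemma phi_bij: "bij_betw phi UNIV (Rest0_carrier tmult E None)"
  using phi_inj phi_surj by (simp add: bij_betw_def)

lemma phi_D: "phi (pD p) = Rest0_D (phi p)"
proof -
  have d: "dom (pD p) = dom p" unfolding pD_def by (auto split: if_splits)
  show ?thesis
  proof (cases "dom p = {}")
    case True then show ?thesis unfolding phi_def Rest0_D_def d by simp
  next
    case False
    note r = rE[OF False]
    have "(\<lambda>x. the (pD p (rE (dom p) x))) = rE (dom p)"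
      using r(2) unfolding pD_def by (auto simp: fun_eq_iff)
    then show ?thesis unfolding phi_def Rest0_D_def d using False r(1) by simp
  qed
qed

lemma dom_pmult: "dom (pmult s t) = {x. \<exists>y. s x = Some y \<and> y \<in> dom t}"
  unfolding pmult_def by (auto split: option.splits)

lemma phi_hom: "phi (pmult s t) = Rest0_mult tmult E (phi s) (phi t)"
proof -
  define A where "A = dom s"
  define B where "B = dom t"
  define C where "C = dom (pmult s t)"
  have C: "C = {x. \<exists>y. s x = Some y \<and> y \<in> B}" unfolding C_def B_def by (rule dom_pmult)
  have ph: "phi s = (fst (phi s), snd (phi s))" "phi t = (fst (phi t), snd (phi t))" by auto
  have R: "Rest0_mult tmult E (phi s) (phi t) =
     (elE E (A \<inter> K (snd (phi s)) B), tmult (tmult (elE E (A \<inter> K (snd (phi s)) B)) (snd (phi s))) (snd (phi t)))"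
    apply (subst ph(1), subst ph(2), subst Rest0_eq)
    using phi_fst_in supp_fst_phi A_def B_def by auto
  show ?thesis
  proof (cases "A = {}")
    case True
    then have "C = {}" using C A_def by auto
    then show ?thesis using True R elE_empty unfolding phi_def C_def A_def by simp
  next
    case Ane: False
    note ra = rE[OF Ane]
    define \<sigma> where "\<sigma> = (\<lambda>x. the (s (rE A x)))"
    have ps: "phi s = (elE E A, Some \<sigma>)" unfolding phi_def \<sigma>_def A_def using Ane A_def by simp
    have sA: "x \<in> A \<Longrightarrow> s x = Some (\<sigma> x)" for x using ra(3) unfolding \<sigma>_def A_def by auto
    have KC: "A \<inter> K (snd (phi s)) B = C"
    proof (intro set_eqI iffI)
      fix x assume "x \<in> A \<inter> K (snd (phi s)) B"
      then have "x \<in> A" "\<sigma> x \<in> B" by (auto simp: ps K_def)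
      then show "x \<in> C" using sA C by auto
    next
      fix x assume "x \<in> C"
      then obtain y where y: "s x = Some y" "y \<in> B" using C by auto
      then have "x \<in> A" using A_def by auto
      then have "\<sigma> x = y" using sA y(1) by simp
      then show "x \<in> A \<inter> K (snd (phi s)) B" using \<open>x \<in> A\<close> y(2) by (simp add: ps K_def)
    qed
    show ?thesis
    proof (cases "C = {}")
      case True
      then show ?thesis using R KC elE_empty unfolding phi_def C_def by simp
    next
      case Cne: False
      note rc = rE[OF Cne]
      then have Bne: "B \<noteq> {}" using C by auto
      note rb = rE[OF Bne]
      define \<tau> where "\<tau> = (\<lambda>x. the (t (rE B x)))"
      have pt: "phi t = (elE E B, Some \<tau>)" unfolding phi_def \<tau>_def B_def using Bne B_def by simp
      have "(\<lambda>x. the (pmult s t (rE C x))) = \<tau> \<circ> \<sigma> \<circ> rE C"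
      proof
        fix x
        have y: "rE C x \<in> C" by (rule rc(2))
        then obtain z where z: "s (rE C x) = Some z" "z \<in> B" using C by auto
        have "rE C x \<in> A" using z(1) A_def by auto
        then have "\<sigma> (rE C x) = z" using sA z(1) by simp
        then show "the (pmult s t (rE C x)) = (\<tau> \<circ> \<sigma> \<circ> rE C) x"
          using z rb(3) unfolding \<tau>_def pmult_def by simp
      qed
      moreover have "phi (pmult s t) = (elE E C, Some (\<lambda>x. the (pmult s t (rE C x))))"
        using Cne unfolding phi_def C_def by simp
      moreover have "Rest0_mult tmult E (phi s) (phi t) = (elE E C, tmult (tmult (elE E C) (Some \<sigma>)) (Some \<tau>))"
        using R KC unfolding ps pt by simp
      ultimately show ?thesis using rc(1) by (simp add: comp_assoc)
    qed
  qed
qed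

lemma one_in: "Some id \<in> E"
proof -
  have "elE E UNIV = Some id" using rE[of UNIV] by (auto simp: fun_eq_iff)
  then show ?thesis using elE_in by metis
qed

lemma ilem: "inductive_left_E_monoid tmult (Some id) E"
  unfolding inductive_left_E_monoid_def
proof (intro conjI ballI allI impI)
  show "is_monoid tmult (Some id)" by (rule tmono)
  show "Some id \<in> E" by (rule one_in)
  show "right_pre_reduced tmult E" by (rule rpr)
  show "\<exists>g. is_meet tmult E e f g" if "e \<in> E" "f \<in> E" for e f using meet[OF that] by blast
  show "\<exists>g. is_dot tmult E t e g" if "e \<in> E" for t e using dot[OF that] by blast
  fix s e f assume ef: "e \<in> E" "f \<in> E" and h: "tmult s e = s \<and> tmult s f = s"
  have i: "e \<in> idems tmult" "f \<in> idems tmult" "elE E (supp e \<inter> supp f) \<in> idems tmult"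
    using ef elE_in Esub by auto
  show "tmult s (meetE tmult E e f) = s"
    unfolding meetE_eq[OF ef] fixes_char[OF i(3)] using h fixes_char[OF i(1)] fixes_char[OF i(2)]
    by (cases s) auto
qed

end

lemma left_ideal_char: "g \<in> idems tmult \<Longrightarrow> left_ideal tmult g = {u. tmult u g = u}"
  unfolding left_ideal_def idems_def by (auto simp: tmult_assoc) metis

lemma protomodal_T: "protomodal tmult (Some id)"
  unfolding protomodal_def
proof (intro conjI ballI allI)
  show "is_monoid tmult (Some id)" by (rule tmono)
  fix e s assume e: "e \<in> idems tmult"
  have "None \<in> Eq_set tmult s (tmult s e)" unfolding Eq_set_def by simp
  then show "Eq_set tmult s (tmult s e) \<noteq> {}" by blast
  let ?g = "idemOf (K s (supp e))"
  have "Eq_set tmult s (tmult s e) = left_ideal tmult ?g"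
    unfolding left_ideal_char[OF idemOf_idem] Eq_set_def
  proof (intro set_eqI)
    fix u
    have d: "tmult (tmult u s) e = tmult u s \<longleftrightarrow> tmult u ?g = u"
      by (rule dot_cond[OF e idemOf_idem supp_idemOf])
    have "tmult u s = tmult u (tmult s e) \<longleftrightarrow> tmult (tmult u s) e = tmult u s"
      by (simp only: tmult_assoc) auto
    then show "u \<in> {u. tmult u s = tmult u (tmult s e)} \<longleftrightarrow> u \<in> {u. tmult u ?g = u}"
      using d by simp
  qed
  then show "\<exists>f\<in>idems tmult. Eq_set tmult s (tmult s e) = left_ideal tmult f"
    using idemOf_idem by blast
qed

lemma integral_T: "integral tmult None"
  unfolding integral_def is_zero_def
  apply (rule conjI)
   apply (rule allI)
  subgoal for s by (cases s) auto
  apply (intro allI)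
  subgoal for s t by (cases s; cases t) auto
  done

theorem theorem7p1:
  shows "protomodal (tmult :: ('a \<Rightarrow> 'a) option \<Rightarrow> _ \<Rightarrow> _) (Some id) \<and>
    (\<forall>E. max_right_pre_reduced (tmult :: ('a \<Rightarrow> 'a) option \<Rightarrow> _ \<Rightarrow> _) E \<longrightarrow>
       inductive_left_E_monoid tmult (Some id) E \<and> integral tmult None \<and> None \<in> E \<and>
       (\<exists>\<phi> :: ('a \<rightharpoonup> 'a) \<Rightarrow> ('a \<Rightarrow> 'a) option \<times> ('a \<Rightarrow> 'a) option.
          bij_betw \<phi> UNIV (Rest0_carrier tmult E None) \<and>
          (\<forall>s t. \<phi> (pmult s t) = Rest0_mult tmult E (\<phi> s) (\<phi> t)) \<and>
          (\<forall>s. \<phi> (pD s) = Rest0_D (\<phi> s))))"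
proof (intro conjI allI impI)
  show "protomodal (tmult :: ('a \<Rightarrow> 'a) option \<Rightarrow> _ \<Rightarrow> _) (Some id)" by (rule protomodal_T)
  fix E :: "('a \<Rightarrow> 'a) option set" assume E: "max_right_pre_reduced tmult E"
  show "inductive_left_E_monoid tmult (Some id) E" by (rule ilem[OF E])
  show "integral tmult None" by (rule integral_T)
  show "None \<in> E" by (rule None_in[OF E])
  show "\<exists>\<phi> :: ('a \<rightharpoonup> 'a) \<Rightarrow> ('a \<Rightarrow> 'a) option \<times> ('a \<Rightarrow> 'a) option.
          bij_betw \<phi> UNIV (Rest0_carrier tmult E None) \<and>
          (\<forall>s t. \<phi> (pmult s t) = Rest0_mult tmult E (\<phi> s) (\<phi> t)) \<and>
          (\<forall>s. \<phi> (pD s) = Rest0_D (\<phi> s))"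
    apply (rule exI[of _ "phi E"])
    using phi_bij[OF E] phi_hom[OF E] phi_D[OF E] by simp
qed

end
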